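(* Consider the closed-loop system $\dot x = f^{\mathsf c}(x,w)$, $x\in\mathbb{R}^n$, with disturbance set $\mathcal W=[\underline w,\overline w]\subseteq\mathbb{R}^q$, where $f^{\mathsf c}$ is continuous and locally Lipschitz in $x$. Let $\mathsf F^{\mathsf c}_{\mathcal S}=(\underline{\mathsf F}^{\mathsf c}_{\mathcal S},\overline{\mathsf F}^{\mathsf c}_{\mathcal S})$ be an $\mathcal S$-localized inclusion function for $f^{\mathsf c}$, and let $\mathsf E_{\mathcal S}$ be the embedding system induced by $\mathsf F^{\mathsf c}_{\mathcal S}$. Let $[\underline x^\star,\overline x^\star]\subseteq\mathcal S$ be an interval. If $$\mathsf E_{\mathcal S}(\underline x^\star,\overline x^\star,\underline w,\overline w)\ \ge_{\mathrm{SE}}\ 0,$$ i.e. $\underline{\mathsf E}_{\mathcal S}(\underline x^\star,\overline x^\star,\underline w,\overline w)\ge 0$ and $\overline{\mathsf E}_{\mathcal S}(\underline x^\star,\overline x^\star,\underline w,\overline w)\le 0$ componentwise, then $[\underline x^\star,\overline x^\star]$ is a $[\underline w,\overline w]$-robustly forward invariant set for $\dot x=f^{\mathsf c}(x,w)$. Moreover, if $\mathsf F^{\mathsf c}_{\mathcal S}$ is the minimal inclusion function of $f^{\mathsf c}$ (jointly in $(x,w)$), then this condition is also necessary for $[\underline x^\star,\overline x^\star]$ to be $[\underline w,\overline w]$-robustly forward invariant.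
   Context: Order and intervals: for $x,y\in\mathbb{R}^n$, $x\le y$ means $x_i\le y_i$ for all $i$; for $\underline x\le\overline x$, $[\underline x,\overline x]=\{x:\underline x\le x\le\overline x\}$. Let $\mathcal T^{2n}_{\ge0}=\{(x,\hat x)\in\mathbb{R}^{2n}: x\le\hat x\}$, identified with intervals of $\mathbb{R}^n$. The southeast order on $\mathbb{R}^{2n}$: $(x,\hat x)\le_{\mathrm{SE}}(y,\hat y)$ iff $x\le y$ and $\hat y\le\hat x$; in particular $(a,b)\ge_{\mathrm{SE}}0$ means $a\ge 0$ and $b\le 0$. For $x,y\in\mathbb{R}^n$ and index $i$, $x_{i:y}$ denotes the vector $x$ with its $i$-th entry replaced by $y_i$. Inclusion functions: for $h:\mathbb{R}^m\to\mathbb{R}^k$, a map $\mathsf H=(\underline{\mathsf H},\overline{\mathsf H}):\mathcal T^{2m}_{\ge0}\to\mathcal T^{2k}_{\ge0}$ is an $\mathcal S$-localized inclusion function for $h$ if $\underline{\mathsf H}(\underline z,\overline z)\le h(z)\le\overline{\mathsf H}(\underline z,\overline z)$ for every $z\in[\underline z,\overline z]$ and every interval $[\underline z,\overline z]\subseteq\mathcal S$. For $f^{\mathsf c}(x,w)$ the argument is $(\underline x,\overline x,\underline w,\overline w)$ and localization refers to $[\underline x,\overline x]\subseteq\mathcal S$ (with $w$ ranging over $[\underline w,\overline w]$). The minimal inclusion function has $\underline{\mathsf F}_i=\inf_{x\in[\underline x,\overline x],w\in[\underline w,\overline w]} f^{\mathsf c}_i(x,w)$ and $\overline{\mathsf F}_i=\sup$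 of the same. Embedding system induced by $\mathsf F^{\mathsf c}_{\mathcal S}$: the map $\mathsf E_{\mathcal S}=(\underline{\mathsf E}_{\mathcal S},\overline{\mathsf E}_{\mathcal S}):\mathcal T^{2n}_{\ge0}\times\mathcal T^{2q}_{\ge0}\to\mathbb{R}^{2n}$ with components $(\underline{\mathsf E}_{\mathcal S}(\underline x,\overline x,\underline w,\overline w))_i=(\underline{\mathsf F}^{\mathsf c}_{\mathcal S}(\underline x,\overline x_{i:\underline x},\underline w,\overline w))_i$ and $(\overline{\mathsf E}_{\mathcal S}(\underline x,\overline x,\underline w,\overline w))_i=(\overline{\mathsf F}^{\mathsf c}_{\mathcal S}(\underline x_{i:\overline x},\overline x,\underline w,\overline w))_i$, $i=1,\dots,n$; the embedding system is $\dot{\underline x}=\underline{\mathsf E}_{\mathcal S}$, $\dot{\overline x}=\overline{\mathsf E}_{\mathcal S}$. Robust forward invariance: a set $\mathcal X$ is $\mathcal W$-robustly forward invariant if every solution $\phi(t,x_0,\mathbf w)$ with $x_0\in\mathcal X$ and any piecewise continuous $\mathbf w:\mathbb{R}\to\mathcal W$ satisfies $\phi(t,x_0,\mathbf w)\in\mathcal X$ for all $t\ge0$. *)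

theory Defs
  imports "HOL-Analysis.Analysis"
begin

text \<open>Vectors in R^n are real^'n, with componentwise order (less_eq_vec);
  intervals are {xl..xu}. Inclusion functions are pairs of maps
  (lower, upper) taking (xl, xu, wl, wu).\<close>

type_synonym ('n,'q) incl_fun =
  "real^'n \<Rightarrow> real^'n \<Rightarrow> real^'q \<Rightarrow> real^'q \<Rightarrow> real^'n"

definition repl :: "real^'n \<Rightarrow> 'n \<Rightarrow> real^'n \<Rightarrow> real^'n" where
  "repl x i y = (\<chi> j. if j = i then y $ j else x $ j)"

definition locally_lipschitz_in_x :: "(real^'n \<Rightarrow> real^'q \<Rightarrow> real^'n) \<Rightarrow> bool" where
  "locally_lipschitz_in_x f \<longleftrightarrow>
     (\<forall>x0 w0. \<exists>e>0. \<exists>L. \<forall>x1 x2 w. x1 \<in> ball x0 e \<and> x2 \<in> ball x0 e \<and> w \<in> ball w0 e \<longrightarrow>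
        dist (f x1 w) (f x2 w) \<le> L * dist x1 x2)"

definition localized_inclusion_function ::
  "(real^'n) set \<Rightarrow> (real^'n \<Rightarrow> real^'q \<Rightarrow> real^'n) \<Rightarrow> ('n,'q) incl_fun \<Rightarrow> ('n,'q) incl_fun \<Rightarrow> bool" where
  "localized_inclusion_function S f Fl Fu \<longleftrightarrow>
     (\<forall>xl xu wl wu. xl \<le> xu \<and> wl \<le> wu \<and> {xl..xu} \<subseteq> S \<longrightarrow>
        (\<forall>x\<in>{xl..xu}. \<forall>w\<in>{wl..wu}. Fl xl xu wl wu \<le> f x w \<and> f x w \<le> Fu xl xu wl wu))"

definition minimal_inclusion_function ::
  "(real^'n \<Rightarrow> real^'q \<Rightarrow> real^'n) \<Rightarrow> ('n,'q) incl_fun \<Rightarrow> ('n,'q) incl_fun \<Rightarrow> bool" where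
  "minimal_inclusion_function f Fl Fu \<longleftrightarrow>
     (\<forall>xl xu wl wu. xl \<le> xu \<and> wl \<le> wu \<longrightarrow>
        Fl xl xu wl wu = (\<chi> i. Inf {f x w $ i | x w. x \<in> {xl..xu} \<and> w \<in> {wl..wu}}) \<and>
        Fu xl xu wl wu = (\<chi> i. Sup {f x w $ i | x w. x \<in> {xl..xu} \<and> w \<in> {wl..wu}}))"

definition emb_lower :: "('n::finite,'q::finite) incl_fun \<Rightarrow> ('n,'q) incl_fun" where
  "emb_lower Fl xl xu wl wu = (\<chi> i. Fl xl (repl xu i xl) wl wu $ i)"

definition emb_upper :: "('n::finite,'q::finite) incl_fun \<Rightarrow> ('n,'q) incl_fun" where
  "emb_upper Fu xl xu wl wu = (\<chi> i. Fu (repl xl i xu) xu wl wu $ i)"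

definition piecewise_continuous :: "(real \<Rightarrow> 'a::topological_space) \<Rightarrow> bool" where
  "piecewise_continuous w \<longleftrightarrow>
     (\<forall>a b. \<exists>D. finite D \<and> (\<forall>t\<in>{a..b} - D. isCont w t) \<and>
        (\<forall>t\<in>D. (\<exists>l. (w \<longlongrightarrow> l) (at_left t)) \<and> (\<exists>r. (w \<longlongrightarrow> r) (at_right t))))"

text \<open>(Caratheodory) solution of x' = f(x, w(t)) on [0,T] starting at x0.\<close>
definition is_solution ::
  "(real^'n \<Rightarrow> real^'q \<Rightarrow> real^'n) \<Rightarrow> (real \<Rightarrow> real^'q) \<Rightarrow> real^'n \<Rightarrow> real \<Rightarrow> (real \<Rightarrow> real^'n) \<Rightarrow> bool" where
  "is_solution f w x0 T x \<longleftrightarrow> 0 \<le> T \<and> x 0 = x0 \<and> continuous_on {0..T} x \<and>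
     (\<forall>t\<in>{0..T}. ((\<lambda>s. f (x s) (w s)) has_integral (x t - x0)) {0..t})"

definition robustly_forward_invariant ::
  "(real^'n \<Rightarrow> real^'q \<Rightarrow> real^'n) \<Rightarrow> (real^'n) set \<Rightarrow> (real^'q) set \<Rightarrow> bool" where
  "robustly_forward_invariant f X W \<longleftrightarrow>
     (\<forall>x0\<in>X. \<forall>w. piecewise_continuous w \<and> (\<forall>t. w t \<in> W) \<longrightarrow>
        (\<forall>T x. is_solution f w x0 T x \<longrightarrow> (\<forall>t\<in>{0..T}. x t \<in> X)))"

end

theory Submission
  imports Defs
begin

definition clampv :: "real^'n \<Rightarrow> real^'n \<Rightarrow> real^'n \<Rightarrow> real^'n" where
  "clampv lo hi y = (\<chi> j. max (lo$j) (min (hi$j) (y$j)))"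

lemma clampv_in: "lo \<le> hi \<Longrightarrow> clampv lo hi y \<in> {lo..hi}"
  by (auto simp: clampv_def less_eq_vec_def)

lemma clampv_id: "y \<in> {lo..hi} \<Longrightarrow> clampv lo hi y = y"
  by (auto simp: clampv_def less_eq_vec_def vec_eq_iff)

lemma clampv_lo: "lo \<le> hi \<Longrightarrow> y$j \<le> lo$j \<Longrightarrow> clampv lo hi y $ j = lo$j"
  by (auto simp: clampv_def less_eq_vec_def)

lemma clampv_hi: "lo \<le> hi \<Longrightarrow> y$j \<ge> hi$j \<Longrightarrow> clampv lo hi y $ j = hi$j"
  by (auto simp: clampv_def less_eq_vec_def)

lemma clampv_mid: "lo$j \<le> y$j \<Longrightarrow> y$j \<le> hi$j \<Longrightarrow> clampv lo hi y $ j = y$j"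
  by (auto simp: clampv_def)

lemma clampv_dist: "dist (clampv lo hi a) (clampv lo hi b) \<le> dist a b"
  unfolding dist_norm
  by (rule norm_le_componentwise_cart) (auto simp: clampv_def)

lemma unif_lip:
  fixes f :: "real^'n \<Rightarrow> real^'q \<Rightarrow> real^'n"
  assumes lip: "locally_lipschitz_in_x f" and W: "compact W"
  shows "\<exists>e>0. \<exists>L\<ge>0. \<forall>x1 x2 w. x1 \<in> ball p e \<and> x2 \<in> ball p e \<and> w \<in> W \<longrightarrow>
        dist (f x1 w) (f x2 w) \<le> L * dist x1 x2"
proof -
  from lip have "\<forall>w0. \<exists>e>0. \<exists>L. \<forall>x1 x2 w. x1 \<in> ball p e \<and> x2 \<in> ball p e \<and> w \<in> ball w0 e \<longrightarrow>
        dist (f x1 w) (f x2 w) \<le> L * dist x1 x2"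
    unfolding locally_lipschitz_in_x_def by blast
  then obtain E LL where E: "\<And>w0. E w0 > 0" and EL: "\<And>w0 x1 x2 w. x1 \<in> ball p (E w0) \<Longrightarrow> x2 \<in> ball p (E w0) \<Longrightarrow> w \<in> ball w0 (E w0) \<Longrightarrow>
        dist (f x1 w) (f x2 w) \<le> LL w0 * dist x1 x2"
    by metis
  have "W \<subseteq> \<Union> ((\<lambda>w0. ball w0 (E w0)) ` W)" using E by auto
  then obtain K where K: "K \<subseteq> W" "finite K" "W \<subseteq> \<Union> ((\<lambda>w0. ball w0 (E w0)) ` K)"
    using compactE_image[OF W, of W "\<lambda>w0. ball w0 (E w0)"] by auto
  define e where "e = Min (insert 1 (E ` K))"
  define L where "L = Max (insert 0 (LL ` K))"
  have e0: "e > 0" unfolding e_def using K E by (subst Min_gr_iff) auto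
  have L0: "L \<ge> 0" unfolding L_def using K by auto
  have "\<forall>x1 x2 w. x1 \<in> ball p e \<and> x2 \<in> ball p e \<and> w \<in> W \<longrightarrow>
        dist (f x1 w) (f x2 w) \<le> L * dist x1 x2"
  proof (intro allI impI)
    fix x1 x2 w assume h: "x1 \<in> ball p e \<and> x2 \<in> ball p e \<and> w \<in> W"
    then obtain w0 where w0: "w0 \<in> K" "w \<in> ball w0 (E w0)" using K by auto
    have "e \<le> E w0" unfolding e_def using K w0 by auto
    then have "dist (f x1 w) (f x2 w) \<le> LL w0 * dist x1 x2"
      using h w0 by (intro EL) auto
    also have "\<dots> \<le> L * dist x1 x2"
      unfolding L_def using K w0 by (intro mult_right_mono) auto
    finally show "dist (f x1 w) (f x2 w) \<le> L * dist x1 x2" .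
  qed
  then show ?thesis using e0 L0 by blast
qed

lemma comp_bound:
  fixes u F :: "real \<Rightarrow> real"
  assumes tt: "t0 \<le> t" and cu: "continuous_on {t0..t} u" and c0: "c \<le> u t0" and ct: "u t < c"
    and K: "K \<ge> 0"
    and int: "\<And>a b. t0 \<le> a \<Longrightarrow> a \<le> b \<Longrightarrow> b \<le> t \<Longrightarrow> (F has_integral (u b - u a)) {a..b}"
    and lb: "\<And>s. s \<in> {t0..t} \<Longrightarrow> u s \<le> c \<Longrightarrow> -K \<le> F s"
  shows "c - u t \<le> K * (t - t0)"
proof -
  define A where "A = {t0..t} \<inter> u -` {c..}"
  have clA: "closed A" unfolding A_def by (rule continuous_closed_preimage[OF cu]) auto
  have neA: "A \<noteq> {}" using tt c0 unfolding A_def by auto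
  have bdA: "bdd_above A" unfolding A_def by (auto intro: bdd_aboveI[of _ t])
  define s1 where "s1 = Sup A"
  have s1A: "s1 \<in> A" unfolding s1_def using closed_contains_Sup[OF neA bdA clA] .
  then have s1: "t0 \<le> s1" "s1 \<le> t" "c \<le> u s1" unfolding A_def by auto
  have after: "u s < c" if "s \<in> {s1<..t}" for s
  proof (rule ccontr)
    assume "\<not> u s < c"
    then have "s \<in> A" using that s1 unfolding A_def by auto
    then have "s \<le> s1" unfolding s1_def using bdA by (rule cSup_upper)
    then show False using that by auto
  qed
  have i1: "(F has_integral (u t - u s1)) {s1..t}" using int[OF s1(1) s1(2)] by simp
  have i2: "((\<lambda>s. if s = s1 then -K else F s) has_integral (u t - u s1)) {s1..t}"
    by (rule has_integral_spike_finite[OF _ _ i1, of "{s1}"]) auto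
  have i3: "((\<lambda>s. -K) has_integral (Henstock_Kurzweil_Integration.content {s1..t} *\<^sub>R (-K))) {s1..t}"
    by (rule has_integral_const_real)
  have "Henstock_Kurzweil_Integration.content {s1..t} *\<^sub>R (-K) \<le> u t - u s1"
  proof (rule has_integral_le[OF i3 i2])
    fix s assume s: "s \<in> {s1..t}"
    show "-K \<le> (if s = s1 then -K else F s)"
    proof (cases "s = s1")
      case False
      then have "u s < c" using s by (intro after) auto
      then show ?thesis using False s s1 by (auto intro!: lb)
    qed simp
  qed
  then have "-K * (t - s1) \<le> u t - u s1" using s1 by (simp add: mult.commute)
  moreover have "K * (t - s1) \<le> K * (t - t0)" using K s1 by (intro mult_left_mono) auto
  ultimately show ?thesis using s1 by linarith
qed

lemma has_integral_comp_nth: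
  "(F has_integral y) S \<Longrightarrow> ((\<lambda>s. F s $ j) has_integral (y $ j)) S"
  using has_integral_linear[OF _ bounded_linear_vec_nth, of F y S j] by (simp add: o_def)

lemma sub_integral:
  fixes F :: "real \<Rightarrow> 'a::euclidean_space"
  assumes int: "\<And>t. t \<in> {0..T} \<Longrightarrow> (F has_integral (x t - x0)) {0..t}"
    and ab: "0 \<le> a" "a \<le> b" "b \<le> T"
  shows "(F has_integral (x b - x a)) {a..b}"
proof -
  have ib: "(F has_integral (x b - x0)) {0..b}" using int ab by auto
  have ia: "(F has_integral (x a - x0)) {0..a}" using int ab by auto
  have "F integrable_on {a..b}"
    using integrable_subinterval_real[OF has_integral_integrable[OF ib]] ab by auto
  then obtain j where j: "(F has_integral j) {a..b}" by blast
  have "(F has_integral ((x a - x0) + j)) {0..b}"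
    by (rule has_integral_combine[OF _ _ ia j]) (use ab in auto)
  then have "(x a - x0) + j = x b - x0" using ib by (rule has_integral_unique)
  then have "j = x b - x a" by (simp add: algebra_simps)
  then show ?thesis using j by simp
qed

lemma local_step:
  fixes f :: "real^'n \<Rightarrow> real^'q \<Rightarrow> real^'n" and x :: "real \<Rightarrow> real^'n"
  assumes lip: "locally_lipschitz_in_x f" and W: "compact W" and xlu: "xl \<le> xu"
    and hl: "\<And>y v j. y \<in> {xl..xu} \<Longrightarrow> y$j = xl$j \<Longrightarrow> v \<in> W \<Longrightarrow> 0 \<le> f y v $ j"
    and hu: "\<And>y v j. y \<in> {xl..xu} \<Longrightarrow> y$j = xu$j \<Longrightarrow> v \<in> W \<Longrightarrow> f y v $ j \<le> 0"
    and wW: "\<And>t. w t \<in> W"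
    and cx: "continuous_on {0..T} x"
    and int: "\<And>t. t \<in> {0..T} \<Longrightarrow> ((\<lambda>s. f (x s) (w s)) has_integral (x t - x0)) {0..t}"
    and t0: "0 \<le> t0" "t0 < T" "x t0 \<in> {xl..xu}"
  shows "\<exists>h>0. \<forall>t\<in>{t0..min T (t0+h)}. x t \<in> {xl..xu}"
proof -
  define p where "p = x t0"
  obtain e L where e: "e > 0" "L \<ge> 0" and eL: "\<And>x1 x2 v. x1 \<in> ball p e \<Longrightarrow> x2 \<in> ball p e \<Longrightarrow> v \<in> W \<Longrightarrow>
        dist (f x1 v) (f x2 v) \<le> L * dist x1 x2"
    using unif_lip[OF lip W, of p] by blast
  have "t0 \<in> {0..T}" using t0 by auto
  then obtain d where d: "d > 0" "\<And>s. s \<in> {0..T} \<Longrightarrow> dist s t0 < d \<Longrightarrow> dist (x s) p < e"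
    using cx e unfolding continuous_on_iff p_def by metis
  define n where "n = real CARD('n)"
  have n1: "n \<ge> 1" unfolding n_def by simp
  define h where "h = min (d/2) (1/(2*n*(L+1)))"
  have h0: "h > 0" unfolding h_def using d n1 e by auto
  define t1 where "t1 = min T (t0+h)"
  define I where "I = {t0..t1}"
  have sI: "s \<in> {0..T}" "dist s t0 < d" "s - t0 \<le> h" "t0 \<le> s" if "s \<in> I" for s
    using that t0 h0 unfolding I_def t1_def h_def dist_real_def by auto
  define P where "P = clampv xl xu"
  have Pbox: "P y \<in> {xl..xu}" for y unfolding P_def by (rule clampv_in[OF xlu])
  have Pp: "P p = p" unfolding P_def p_def using t0 by (simp add: clampv_id)
  have xball: "x s \<in> ball p e" if "s \<in> I" for s
    using d(2)[OF sI(1,2)[OF that]] by (simp add: dist_commute)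
  have Pball: "P (x s) \<in> ball p e" if "s \<in> I" for s
  proof -
    have "dist p (P (x s)) = dist (P p) (P (x s))" using Pp by simp
    also have "\<dots> \<le> dist p (x s)" unfolding P_def by (rule clampv_dist)
    finally show ?thesis using xball[OF that] by simp
  qed
  define V where "V s = dist (x s) (P (x s))" for s
  have Vb: "V s \<le> 2*e" if "s \<in> I" for s
  proof -
    have "V s \<le> dist (x s) p + dist p (P (x s))" unfolding V_def by (rule dist_triangle)
    then show ?thesis using xball[OF that] Pball[OF that] by (simp add: dist_commute)
  qed
  have neI: "I \<noteq> {}" unfolding I_def t1_def using t0 h0 by auto
  have bdd: "bdd_above (V ` I)" using Vb by (auto intro: bdd_aboveI[of _ "2*e"])
  define m where "m = Sup (V ` I)"
  have Vm: "V s \<le> m" if "s \<in> I" for s unfolding m_def by (rule cSUP_upper[OF that bdd])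
  have m0: "m \<ge> 0"
  proof -
    obtain s where "s \<in> I" using neI by blast
    then show ?thesis using Vm[of s] unfolding V_def by (meson zero_le_dist order_trans)
  qed
  have Lm: "L * m \<ge> 0" using e m0 by simp
  have flip: "\<bar>f (x s) (w s) $ j - f (P (x s)) (w s) $ j\<bar> \<le> L * m" if "s \<in> I" for s j
  proof -
    have "\<bar>f (x s) (w s) $ j - f (P (x s)) (w s) $ j\<bar> = \<bar>(f (x s) (w s) - f (P (x s)) (w s)) $ j\<bar>" by simp
    also have "\<dots> \<le> norm (f (x s) (w s) - f (P (x s)) (w s))" by (rule component_le_norm_cart)
    also have "\<dots> = dist (f (x s) (w s)) (f (P (x s)) (w s))" by (simp add: dist_norm)
    also have "\<dots> \<le> L * V s" unfolding V_def using xball[OF that] Pball[OF that] wW by (intro eL)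
    also have "\<dots> \<le> L * m" using Vm[OF that] e by (intro mult_left_mono) auto
    finally show ?thesis .
  qed
  have sub: "((\<lambda>s. f (x s) (w s)) has_integral (x b - x a)) {a..b}" if "t0 \<le> a" "a \<le> b" "b \<le> t1" for a b
    by (rule sub_integral[OF int]) (use that t0 in \<open>auto simp: t1_def\<close>)
  have cxI: "continuous_on {t0..t} x" if "t \<in> I" for t
    by (rule continuous_on_subset[OF cx]) (use that t0 in \<open>auto simp: I_def t1_def\<close>)
  have comp: "\<bar>(x t - P (x t)) $ j\<bar> \<le> L * m * h" if tI: "t \<in> I" for t j
  proof -
    have tt: "t0 \<le> t" "t \<le> t1" "t - t0 \<le> h" using tI sI[OF tI] unfolding I_def by auto
    have sIs: "s \<in> I" if "s \<in> {t0..t}" for s using that tt unfolding I_def by auto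
    consider "x t $ j < xl $ j" | "x t $ j > xu $ j" | "xl $ j \<le> x t $ j" "x t $ j \<le> xu $ j" by fastforce
    then show ?thesis
    proof cases
      case 1
      have "xl $ j - x t $ j \<le> L * m * (t - t0)"
      proof (rule comp_bound[where u = "\<lambda>s. x s $ j" and F = "\<lambda>s. f (x s) (w s) $ j"])
        show "continuous_on {t0..t} (\<lambda>s. x s $ j)"
          by (intro continuous_on_component cxI[OF tI])
        show "xl $ j \<le> x t0 $ j" using t0 by (auto simp: less_eq_vec_def)
        show "((\<lambda>s. f (x s) (w s) $ j) has_integral (x b $ j - x a $ j)) {a..b}"
          if "t0 \<le> a" "a \<le> b" "b \<le> t" for a b
          using has_integral_comp_nth[OF sub, of a b j] that tt by simp
        fix s assume s: "s \<in> {t0..t}" "x s $ j \<le> xl $ j"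
        have "P (x s) $ j = xl $ j" unfolding P_def by (rule clampv_lo[OF xlu s(2)])
        then have "0 \<le> f (P (x s)) (w s) $ j" using Pbox wW by (intro hl) auto
        then show "- (L * m) \<le> f (x s) (w s) $ j" using flip[OF sIs[OF s(1)], of j] by linarith
      qed (use tt 1 Lm in auto)
      moreover have "P (x t) $ j = xl $ j" unfolding P_def using 1 by (intro clampv_lo[OF xlu]) auto
      moreover have "L * m * (t - t0) \<le> L * m * h" using tt Lm by (intro mult_left_mono) auto
      ultimately show ?thesis using 1 by simp
    next
      case 2
      have "(- xu $ j) - (- x t $ j) \<le> L * m * (t - t0)"
      proof (rule comp_bound[where u = "\<lambda>s. - x s $ j" and F = "\<lambda>s. - f (x s) (w s) $ j"])
        show "continuous_on {t0..t} (\<lambda>s. - x s $ j)"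
          by (intro continuous_intros continuous_on_component cxI[OF tI])
        show "- xu $ j \<le> - x t0 $ j" using t0 by (auto simp: less_eq_vec_def)
        show "((\<lambda>s. - f (x s) (w s) $ j) has_integral (- x b $ j - - x a $ j)) {a..b}"
          if "t0 \<le> a" "a \<le> b" "b \<le> t" for a b
          using has_integral_neg[OF has_integral_comp_nth[OF sub, of a b j]] that tt by simp
        fix s assume s: "s \<in> {t0..t}" "- x s $ j \<le> - xu $ j"
        have "P (x s) $ j = xu $ j" unfolding P_def using s by (intro clampv_hi[OF xlu]) auto
        then have "f (P (x s)) (w s) $ j \<le> 0" using Pbox wW by (intro hu) auto
        then show "- (L * m) \<le> - f (x s) (w s) $ j" using flip[OF sIs[OF s(1)], of j] by linarith
      qed (use tt 2 Lm in auto)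
      moreover have "P (x t) $ j = xu $ j" unfolding P_def using 2 by (intro clampv_hi[OF xlu]) auto
      moreover have "L * m * (t - t0) \<le> L * m * h" using tt Lm by (intro mult_left_mono) auto
      ultimately show ?thesis using 2 by simp
    next
      case 3
      then have "P (x t) $ j = x t $ j" unfolding P_def by (rule clampv_mid)
      then show ?thesis using Lm h0 by simp
    qed
  qed
  have key: "V t \<le> m / 2" if tI: "t \<in> I" for t
  proof -
    have "V t = norm (x t - P (x t))" unfolding V_def by (simp add: dist_norm)
    also have "\<dots> \<le> (\<Sum>j\<in>UNIV. \<bar>(x t - P (x t)) $ j\<bar>)" by (rule norm_le_l1_cart)
    also have "\<dots> \<le> (\<Sum>j\<in>(UNIV::'n set). L * m * h)" by (intro sum_mono comp[OF tI])
    also have "\<dots> = n * L * h * m" unfolding n_def by simp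
    also have "\<dots> \<le> (1/2) * m"
    proof (rule mult_right_mono[OF _ m0])
      have "n * L * h \<le> n * (L + 1) * h" using n1 h0 by (intro mult_right_mono mult_left_mono) auto
      also have "\<dots> \<le> n * (L+1) * (1/(2*n*(L+1)))"
        using n1 e by (intro mult_left_mono) (auto simp: h_def)
      also have "\<dots> = 1/2"
      proof -
        have "n * (L+1) > 0" using n1 e by (intro mult_pos_pos) auto
        then show ?thesis by (simp add: field_simps)
      qed
      finally show "n * L * h \<le> 1/2" .
    qed
    finally show ?thesis by simp
  qed
  have "Sup (V ` I) \<le> m / 2" by (rule cSUP_least[OF neI key])
  then have "m \<le> m / 2" by (simp add: m_def)
  then have m00: "m = 0" using m0 by simp
  have "x t \<in> {xl..xu}" if "t \<in> I" for t
  proof -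
    have "V t = 0" using Vm[OF that] m00 unfolding V_def by (meson zero_le_dist antisym)
    then have "x t = P (x t)" unfolding V_def by simp
    then show ?thesis using Pbox by metis
  qed
  then show ?thesis using h0 unfolding I_def t1_def by blast
qed

lemma invariance:
  fixes f :: "real^'n \<Rightarrow> real^'q \<Rightarrow> real^'n" and x :: "real \<Rightarrow> real^'n"
  assumes lip: "locally_lipschitz_in_x f" and W: "compact W" and xlu: "xl \<le> xu"
    and hl: "\<And>y v j. y \<in> {xl..xu} \<Longrightarrow> y$j = xl$j \<Longrightarrow> v \<in> W \<Longrightarrow> 0 \<le> f y v $ j"
    and hu: "\<And>y v j. y \<in> {xl..xu} \<Longrightarrow> y$j = xu$j \<Longrightarrow> v \<in> W \<Longrightarrow> f y v $ j \<le> 0"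
    and wW: "\<And>t. w t \<in> W"
    and cx: "continuous_on {0..T} x"
    and int: "\<And>t. t \<in> {0..T} \<Longrightarrow> ((\<lambda>s. f (x s) (w s)) has_integral (x t - x0)) {0..t}"
    and x0: "x 0 = x0" "x0 \<in> {xl..xu}"
  shows "\<forall>t\<in>{0..T}. x t \<in> {xl..xu}"
proof (rule ccontr)
  assume nt: "\<not> ?thesis"
  define B where "B = {t\<in>{0..T}. x t \<notin> {xl..xu}}"
  have neB: "B \<noteq> {}" using nt unfolding B_def by auto
  have bdB: "bdd_below B" unfolding B_def by (auto intro: bdd_belowI[of _ 0])
  define t0 where "t0 = Inf B"
  have before: "x s \<in> {xl..xu}" if "s \<in> {0..T}" "s < t0" for s
  proof (rule ccontr)
    assume "x s \<notin> {xl..xu}"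
    then have "s \<in> B" using that unfolding B_def by auto
    then have "t0 \<le> s" unfolding t0_def using bdB by (rule cInf_lower)
    then show False using that by auto
  qed
  obtain b0 where b0: "b0 \<in> B" using neB by blast
  have "t0 \<le> b0" unfolding t0_def using b0 bdB by (rule cInf_lower)
  moreover have "b0 \<le> T" using b0 unfolding B_def by simp
  ultimately have t0T: "t0 \<le> T" by simp
  have t00: "0 \<le> t0" unfolding t0_def using neB by (rule cInf_greatest) (auto simp: B_def)
  have upto: "x s \<in> {xl..xu}" if "s \<in> {0..t0}" for s
  proof -
    define C where "C = {0..T} \<inter> x -` {xl..xu}"
    have clC: "closed C" unfolding C_def by (rule continuous_closed_preimage[OF cx]) auto
    have sub: "{0..t0} \<subseteq> C"
    proof (cases "t0 = 0")
      case True then show ?thesis using x0 t0T unfolding C_def by auto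
    next
      case False
      then have "0 < t0" using t00 by auto
      have "{0..<t0} \<subseteq> C" unfolding C_def using before t0T by auto
      then have "closure {0..<t0} \<subseteq> C" using clC by (rule closure_minimal)
      then show ?thesis using closure_atLeastLessThan[OF \<open>0 < t0\<close>] by simp
    qed
    then show ?thesis using that unfolding C_def by auto
  qed
  have "t0 < T"
  proof (rule ccontr)
    assume "\<not> t0 < T"
    then have "t0 = T" using t0T by auto
    then show False using upto b0 unfolding B_def by auto
  qed
  moreover have "x t0 \<in> {xl..xu}" using upto t00 by simp
  ultimately obtain h where h: "h > 0" "\<forall>t\<in>{t0..min T (t0+h)}. x t \<in> {xl..xu}"
    using local_step[OF lip W xlu hl hu wW cx int t00] by blast
  have "t0 < min T (t0 + h)" using h(1) \<open>t0 < T\<close> by simp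
  then have "Inf B < min T (t0 + h)" unfolding t0_def .
  then obtain b where "b \<in> B" "b < min T (t0 + h)" using cInf_lessD[OF neB] by blast
  moreover have "t0 \<le> b" unfolding t0_def using bdB \<open>b \<in> B\<close> by (intro cInf_lower)
  ultimately have "b \<in> {t0..min T (t0+h)}" by simp
  then have "x b \<in> {xl..xu}" using h(2) by blast
  then show False using \<open>b \<in> B\<close> unfolding B_def by simp
qed


lemma ode_exists:
  fixes f :: "real^'n \<Rightarrow> real^'q \<Rightarrow> real^'n"
  assumes lip: "locally_lipschitz_in_x f" and r: "r > 0"
  shows "\<exists>T>0. \<exists>x. is_solution f (\<lambda>_. w0) p T x \<and> (\<forall>t\<in>{0..T}. dist (x t) p \<le> r)"
proof -
  define g where "g y = f y w0" for y
  obtain e L0 where e: "e > 0" and eL0: "\<And>x1 x2. x1 \<in> ball p e \<Longrightarrow> x2 \<in> ball p e \<Longrightarrow>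
        dist (g x1) (g x2) \<le> L0 * dist x1 x2"
    using lip unfolding locally_lipschitz_in_x_def g_def by (metis centre_in_ball)
  define L where "L = \<bar>L0\<bar> + 1"
  have L: "L > 0" unfolding L_def by simp
  have eL: "dist (g x1) (g x2) \<le> L * dist x1 x2" if "x1 \<in> ball p e" "x2 \<in> ball p e" for x1 x2
  proof -
    have "dist (g x1) (g x2) \<le> L0 * dist x1 x2" by (rule eL0[OF that])
    also have "\<dots> \<le> L * dist x1 x2" unfolding L_def by (intro mult_right_mono) auto
    finally show ?thesis .
  qed
  define n where "n = real CARD('n)"
  have n1: "n \<ge> 1" unfolding n_def by simp
  define c where "c = min r (e/2) / n"
  have c0: "c > 0" unfolding c_def using r e n1 by auto
  have cr: "c \<le> r" unfolding c_def using r e n1 by (auto simp: divide_le_eq intro: order_trans[of _ r])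
  have nc: "n * c < e" unfolding c_def using e n1 by auto
  define lo where "lo = p - (\<chi> j. c)"
  define hi where "hi = p + (\<chi> j. c)"
  have lohi: "lo \<le> hi" unfolding lo_def hi_def using c0 by (auto simp: less_eq_vec_def)
  define Q where "Q = clampv lo hi"
  have cube_comp: "\<bar>(y - p) $ j\<bar> \<le> c" if "y \<in> {lo..hi}" for y j
  proof -
    have "p $ j - c \<le> y $ j" "y $ j \<le> p $ j + c"
      using that unfolding lo_def hi_def by (auto simp: less_eq_vec_def)
    then show ?thesis by (simp add: abs_le_iff)
  qed
  have cube_ball: "y \<in> ball p e" if "y \<in> {lo..hi}" for y
  proof -
    have "dist p y = norm (y - p)" by (simp add: dist_norm norm_minus_commute)
    also have "\<dots> \<le> (\<Sum>j\<in>UNIV. \<bar>(y - p) $ j\<bar>)" by (rule norm_le_l1_cart)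
    also have "\<dots> \<le> (\<Sum>j\<in>(UNIV::'n set). c)" by (intro sum_mono cube_comp[OF that])
    also have "\<dots> = n * c" unfolding n_def by simp
    finally show ?thesis using nc by simp
  qed
  have Qc: "Q y \<in> {lo..hi}" for y unfolding Q_def by (rule clampv_in[OF lohi])
  define G where "G y = g (Q y)" for y
  have Glip: "dist (G a) (G b) \<le> L * dist a b" for a b
  proof -
    have "dist (G a) (G b) \<le> L * dist (Q a) (Q b)" unfolding G_def
      by (intro eL cube_ball Qc)
    also have "\<dots> \<le> L * dist a b" unfolding Q_def using L by (intro mult_left_mono clampv_dist) auto
    finally show ?thesis .
  qed
  define M where "M = norm (g p) + L * e + 1"
  have M: "M > 0" unfolding M_def using L e by (auto intro: add_nonneg_pos)
  have Gb: "norm (G a) \<le> M" for a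
  proof -
    have pb: "p \<in> ball p e" using e by simp
    have "dist (G a) (g p) \<le> L * dist (Q a) p" unfolding G_def by (intro eL cube_ball Qc pb)
    also have "\<dots> \<le> L * e" using cube_ball[OF Qc[of a]] L by (intro mult_left_mono) (auto simp: dist_commute)
    finally have "dist (G a) (g p) \<le> L * e" .
    then have "norm (G a) \<le> norm (g p) + L * e" by (metis dist_norm norm_triangle_sub order_trans add_le_cancel_left add.commute)
    then show ?thesis unfolding M_def by simp
  qed
  have Gc: "continuous_on UNIV G"
    by (rule lipschitz_on_continuous_on[of L]) (use Glip L in \<open>auto simp: lipschitz_on_def\<close>)
  define T where "T = min (1 / (2 * L)) (c / M)"
  have T0: "T > 0" unfolding T_def using L c0 M by auto
  have TL: "L * T \<le> 1/2" unfolding T_def using L by (auto simp: min_def field_simps)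
  have TM: "M * T \<le> c" unfolding T_def using M by (auto simp: min_def field_simps)
  define ct where "ct t = max 0 (min T t)" for t
  have ct: "0 \<le> ct t" "ct t \<le> T" for t unfolding ct_def using T0 by auto
  have ctc: "continuous_on UNIV ct" unfolding ct_def by (intro continuous_intros)
  define H where "H u s = G (apply_bcontfun u s)" for u :: "real \<Rightarrow>\<^sub>C (real^'n)" and s
  have Hc: "continuous_on S (H u)" for u S
    unfolding H_def by (rule continuous_on_compose2[OF Gc]) auto
  have Hi: "H u integrable_on {a..b}" for u a b by (rule integrable_continuous_real[OF Hc])
  define Phi0 where "Phi0 u t = p + integral {0..ct t} (H u)" for u t
  have Phi0_b: "Phi0 u \<in> bcontfun" for u
  proof (rule bcontfun_normI)
    have "continuous_on {0..T} (\<lambda>b. integral {0..b} (H u))"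
      by (rule indefinite_integral_continuous_1[OF Hi])
    then have "continuous_on UNIV (\<lambda>t. integral {0..ct t} (H u))"
      by (rule continuous_on_compose2[OF _ ctc]) (use ct in auto)
    then show "continuous_on UNIV (Phi0 u)" unfolding Phi0_def by (intro continuous_intros)
    fix t
    have "norm (integral {0..ct t} (H u)) \<le> M * (ct t - 0)"
      by (rule integral_bound) (use ct Hc Gb in \<open>auto simp: H_def\<close>)
    moreover have "M * (ct t - 0) \<le> M * T" using ct[of t] M by (intro mult_left_mono) auto
    ultimately have "norm (integral {0..ct t} (H u)) \<le> M * T" by linarith
    then show "norm (Phi0 u t) \<le> norm p + M * T" unfolding Phi0_def
      by (meson add_left_mono norm_triangle_ineq order_trans)
  qed
  define Phi where "Phi u = Bcontfun (Phi0 u)" for u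
  have Phi_ap: "apply_bcontfun (Phi u) t = Phi0 u t" for u t
    unfolding Phi_def by (simp add: Bcontfun_inverse[OF Phi0_b])
  have contr: "dist (Phi u) (Phi v) \<le> (1/2) * dist u v" for u v
  proof (rule dist_bound)
    fix t
    have "dist (Phi u t) (Phi v t) = norm (integral {0..ct t} (H u) - integral {0..ct t} (H v))"
      unfolding Phi_ap Phi0_def by (simp add: dist_norm)
    also have "\<dots> = norm (integral {0..ct t} (\<lambda>s. H u s - H v s))"
      by (simp add: integral_diff[OF Hi Hi])
    also have "\<dots> \<le> (L * dist u v) * (ct t - 0)"
    proof (rule integral_bound)
      show "0 \<le> ct t" by (rule ct)
      show "continuous_on {0..ct t} (\<lambda>s. H u s - H v s)" by (intro continuous_intros Hc)
      fix s
      have "norm (H u s - H v s) = dist (H u s) (H v s)" by (simp add: dist_norm)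
      also have "\<dots> \<le> L * dist (apply_bcontfun u s) (apply_bcontfun v s)" unfolding H_def by (rule Glip)
      also have "\<dots> \<le> L * dist u v" using L by (intro mult_left_mono dist_bounded) auto
      finally show "norm (H u s - H v s) \<le> L * dist u v" .
    qed
    also have "\<dots> \<le> (L * dist u v) * T" using ct[of t] L by (intro mult_left_mono) auto
    also have "\<dots> = (L * T) * dist u v" by simp
    also have "\<dots> \<le> (1/2) * dist u v" using TL by (intro mult_right_mono) auto
    finally show "dist (Phi u t) (Phi v t) \<le> (1/2) * dist u v" .
  qed
  obtain u where u: "Phi u = u" using banach_fix_type[of "1/2" Phi] contr by auto
  define x where "x t = apply_bcontfun u t" for t
  have xeq: "x t = p + integral {0..ct t} (H u)" for t
    unfolding x_def using Phi_ap[of u t] u unfolding Phi0_def by simp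
  have xb: "norm (x t - p) \<le> c" if "t \<in> {0..T}" for t
  proof -
    have "norm (x t - p) = norm (integral {0..ct t} (H u))" using xeq by simp
    also have "\<dots> \<le> M * (ct t - 0)"
      by (rule integral_bound) (use ct Hc Gb in \<open>auto simp: H_def\<close>)
    also have "\<dots> \<le> M * T" using ct[of t] M by (intro mult_left_mono) auto
    finally show ?thesis using TM by simp
  qed
  have xcube: "x t \<in> {lo..hi}" if "t \<in> {0..T}" for t
  proof -
    have "\<bar>(x t - p) $ j\<bar> \<le> c" for j
      using component_le_norm_cart[of "x t - p" j] xb[OF that] by simp
    then show ?thesis unfolding lo_def hi_def by (auto simp: less_eq_vec_def abs_le_iff algebra_simps)
  qed
  have HQ: "H u s = f (x s) w0" if "s \<in> {0..T}" for s
    unfolding H_def G_def g_def Q_def x_def[symmetric] using clampv_id[OF xcube[OF that]] by simp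
  have sol: "is_solution f (\<lambda>_. w0) p T x"
    unfolding is_solution_def
  proof (intro conjI ballI)
    show "0 \<le> T" using T0 by simp
    show "x 0 = p" using xeq[of 0] unfolding ct_def using T0 by simp
    show "continuous_on {0..T} x" unfolding x_def by simp
    fix t assume t: "t \<in> {0..T}"
    have "(H u has_integral integral {0..t} (H u)) {0..t}" using Hi by blast
    moreover have "ct t = t" unfolding ct_def using t by auto
    ultimately have "(H u has_integral (x t - p)) {0..t}" using xeq[of t] by simp
    then show "((\<lambda>s. f (x s) w0) has_integral (x t - p)) {0..t}"
      by (subst has_integral_cong[where g = "H u"]) (use HQ t in auto)
  qed
  moreover have "\<forall>t\<in>{0..T}. dist (x t) p \<le> r"
  proof
    fix t assume "t \<in> {0..T}"
    then have "norm (x t - p) \<le> c" by (rule xb)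
    then show "dist (x t) p \<le> r" using cr by (simp add: dist_norm)
  qed
  ultimately show ?thesis using T0 by blast
qed

lemma exit_sol:
  fixes f :: "real^'n \<Rightarrow> real^'q \<Rightarrow> real^'n"
  assumes cont: "continuous_on UNIV (\<lambda>(x, w). f x w)"
    and lip: "locally_lipschitz_in_x f"
    and sg: "\<sigma> * f y v $ j < 0" "\<bar>\<sigma>\<bar> = 1"
  shows "\<exists>T x. is_solution f (\<lambda>_. v) y T x \<and> \<sigma> * x T $ j < \<sigma> * y $ j"
proof -
  define a where "a = - (\<sigma> * f y v $ j)"
  have a: "a > 0" using sg unfolding a_def by simp
  have "continuous_on UNIV ((\<lambda>(x, w). f x w) \<circ> (\<lambda>z. (z, v)))"
    by (rule continuous_on_compose[OF _ continuous_on_subset[OF cont]]) (auto intro!: continuous_intros)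
  then have cz: "continuous_on UNIV (\<lambda>z. f z v)" by (simp add: o_def)
  obtain r where r: "r > 0" "\<And>z. dist z y < r \<Longrightarrow> dist (f z v) (f y v) < a/2"
    using cz a unfolding continuous_on_iff by (metis UNIV_I half_gt_zero)
  obtain T x where T: "T > 0" and sol: "is_solution f (\<lambda>_. v) y T x"
    and xr: "\<forall>t\<in>{0..T}. dist (x t) y \<le> r/2"
    using ode_exists[OF lip, of "r/2" v y] r by auto
  have bnd: "\<sigma> * f (x s) v $ j \<le> - a/2" if "s \<in> {0..T}" for s
  proof -
    have "dist (x s) y \<le> r/2" using xr that by blast
    then have "dist (x s) y < r" using r(1) by linarith
    then have "dist (f (x s) v) (f y v) < a/2" by (rule r(2))
    then have "\<bar>(f (x s) v - f y v) $ j\<bar> < a/2"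
      using component_le_norm_cart[of "f (x s) v - f y v" j] by (simp add: dist_norm)
    then have "\<bar>f (x s) v $ j - f y v $ j\<bar> < a/2" by simp
    moreover have "\<sigma> * (f (x s) v $ j - f y v $ j) \<le> \<bar>f (x s) v $ j - f y v $ j\<bar>"
      using abs_ge_self[of "\<sigma> * (f (x s) v $ j - f y v $ j)"] sg(2) by (simp add: abs_mult)
    ultimately show ?thesis unfolding a_def by (simp add: right_diff_distrib)
  qed
  have int: "((\<lambda>s. f (x s) v) has_integral (x T - y)) {0..T}"
    using sol T unfolding is_solution_def by auto
  then have "((\<lambda>s. \<sigma> * f (x s) v $ j) has_integral (\<sigma> * (x T - y) $ j)) {0..T}"
    by (intro has_integral_mult_right has_integral_comp_nth)
  moreover have "((\<lambda>s. - a/2) has_integral (Henstock_Kurzweil_Integration.content {0..T} *\<^sub>R (- a/2))) {0..T}"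
    by (rule has_integral_const_real)
  ultimately have "\<sigma> * (x T - y) $ j \<le> Henstock_Kurzweil_Integration.content {0..T} *\<^sub>R (- a/2)"
    using bnd by (rule has_integral_le)
  also have "\<dots> = - (T * a / 2)" using T by simp
  also have "\<dots> < 0" using T a by simp
  finally have "\<sigma> * x T $ j < \<sigma> * y $ j" by (simp add: algebra_simps)
  then show ?thesis using sol by blast
qed


lemma repl_nth: "repl x i y $ k = (if k = i then y $ k else x $ k)"
  by (simp add: repl_def)

theorem proposition1:
  fixes f :: "real^'n \<Rightarrow> real^'q \<Rightarrow> real^'n"
    and Fl Fu :: "('n,'q) incl_fun"
    and S :: "(real^'n) set"
    and wl wu :: "real^'q"
    and xl xu :: "real^'n"
  assumes cont: "continuous_on UNIV (\<lambda>(x, w). f x w)"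
    and lip: "locally_lipschitz_in_x f"
    and W: "wl \<le> wu"
    and incl: "localized_inclusion_function S f Fl Fu"
    and box: "xl \<le> xu" "{xl..xu} \<subseteq> S"
  shows "(emb_lower Fl xl xu wl wu \<ge> 0 \<and> emb_upper Fu xl xu wl wu \<le> 0
            \<longrightarrow> robustly_forward_invariant f {xl..xu} {wl..wu})
       \<and> (minimal_inclusion_function f Fl Fu \<longrightarrow>
            robustly_forward_invariant f {xl..xu} {wl..wu}
            \<longrightarrow> emb_lower Fl xl xu wl wu \<ge> 0 \<and> emb_upper Fu xl xu wl wu \<le> 0)"
proof (intro conjI impI)
  have lo_ord: "xl \<le> repl xu j xl" for j using box(1) by (auto simp: less_eq_vec_def repl_nth)
  have hi_ord: "repl xl j xu \<le> xu" for j using box(1) by (auto simp: less_eq_vec_def repl_nth)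
  have lo_face: "y \<in> {xl..repl xu j xl} \<longleftrightarrow> y \<in> {xl..xu} \<and> y $ j = xl $ j" for y j
    using box(1) by (auto simp: less_eq_vec_def repl_nth) (metis order_antisym)+
  have hi_face: "y \<in> {repl xl j xu..xu} \<longleftrightarrow> y \<in> {xl..xu} \<and> y $ j = xu $ j" for y j
    using box(1) by (auto simp: less_eq_vec_def repl_nth) (metis order_antisym)+
  {
    assume emb: "emb_lower Fl xl xu wl wu \<ge> 0 \<and> emb_upper Fu xl xu wl wu \<le> 0"
    have hl: "0 \<le> f y v $ j" if "y \<in> {xl..xu}" "y$j = xl$j" "v \<in> {wl..wu}" for y v j
    proof -
      have "0 \<le> emb_lower Fl xl xu wl wu $ j" using emb by (simp add: less_eq_vec_def)
      also have "\<dots> = Fl xl (repl xu j xl) wl wu $ j" by (simp add: emb_lower_def)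
      also have "\<dots> \<le> f y v $ j"
      proof -
        have "{xl..repl xu j xl} \<subseteq> S" using box(2) lo_face by blast
        then have "Fl xl (repl xu j xl) wl wu \<le> f y v"
          using incl lo_ord[of j] W that lo_face unfolding localized_inclusion_function_def by blast
        then show ?thesis by (simp add: less_eq_vec_def)
      qed
      finally show ?thesis .
    qed
    have hu: "f y v $ j \<le> 0" if "y \<in> {xl..xu}" "y$j = xu$j" "v \<in> {wl..wu}" for y v j
    proof -
      have "f y v $ j \<le> Fu (repl xl j xu) xu wl wu $ j"
      proof -
        have "{repl xl j xu..xu} \<subseteq> S" using box(2) hi_face by blast
        then have "f y v \<le> Fu (repl xl j xu) xu wl wu"
          using incl hi_ord[of j] W that hi_face unfolding localized_inclusion_function_def by blast
        then show ?thesis by (simp add: less_eq_vec_def)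
      qed
      also have "\<dots> = emb_upper Fu xl xu wl wu $ j" by (simp add: emb_upper_def)
      also have "\<dots> \<le> 0" using emb by (simp add: less_eq_vec_def)
      finally show ?thesis .
    qed
    show "robustly_forward_invariant f {xl..xu} {wl..wu}"
      unfolding robustly_forward_invariant_def
    proof (intro ballI allI impI)
      fix x0 w T x t
      assume x0: "x0 \<in> {xl..xu}" and w: "piecewise_continuous w \<and> (\<forall>t. w t \<in> {wl..wu})"
        and sol: "is_solution f w x0 T x" and t: "t \<in> {0..T}"
      have wW: "\<And>t. w t \<in> {wl..wu}" using w by blast
      have cx: "continuous_on {0..T} x" using sol by (simp add: is_solution_def)
      have int: "\<And>t. t \<in> {0..T} \<Longrightarrow> ((\<lambda>s. f (x s) (w s)) has_integral (x t - x0)) {0..t}"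
        using sol by (simp add: is_solution_def)
      have x00: "x 0 = x0" using sol by (simp add: is_solution_def)
      have "\<forall>t\<in>{0..T}. x t \<in> {xl..xu}"
        by (rule invariance[OF lip compact_interval box(1) hl hu wW cx int x00 x0])
      then show "x t \<in> {xl..xu}" using t by blast
    qed
  }
  assume minf: "minimal_inclusion_function f Fl Fu"
    and rfi: "robustly_forward_invariant f {xl..xu} {wl..wu}"
  have pc: "piecewise_continuous (\<lambda>_. v)" for v :: "real^'q"
    unfolding piecewise_continuous_def by (intro allI exI[of _ "{}"]) auto
  have solbox: "x T \<in> {xl..xu}" if "is_solution f (\<lambda>_. v) y T x" "y \<in> {xl..xu}" "v \<in> {wl..wu}" for v y T x
  proof -
    have "piecewise_continuous (\<lambda>_::real. v) \<and> (\<forall>t::real. v \<in> {wl..wu}) \<longrightarrow>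
        (\<forall>T x. is_solution f (\<lambda>_. v) y T x \<longrightarrow> (\<forall>t\<in>{0..T}. x t \<in> {xl..xu}))"
      using rfi that(2) unfolding robustly_forward_invariant_def by blast
    then have "\<forall>t\<in>{0..T}. x t \<in> {xl..xu}" using pc[of v] that by blast
    moreover have "T \<in> {0..T}" using that(1) by (simp add: is_solution_def)
    ultimately show ?thesis by blast
  qed
  have "emb_lower Fl xl xu wl wu $ j \<ge> 0" for j
  proof (rule ccontr)
    assume "\<not> ?thesis"
    then have neg: "Fl xl (repl xu j xl) wl wu $ j < 0" by (simp add: emb_lower_def)
    define X where "X = {f x w $ j | x w. x \<in> {xl..repl xu j xl} \<and> w \<in> {wl..wu}}"
    have "Fl xl (repl xu j xl) wl wu $ j = Inf X"
      using minf lo_ord[of j] W unfolding minimal_inclusion_function_def X_def by simp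
    then have "Inf X < 0" using neg by simp
    moreover have "X \<noteq> {}" unfolding X_def using lo_ord[of j] W by auto
    ultimately obtain el where "el \<in> X" "el < 0" using cInf_lessD by blast
    then obtain y v where yv: "y \<in> {xl..xu}" "y $ j = xl $ j" "v \<in> {wl..wu}" "f y v $ j < 0"
      unfolding X_def lo_face by auto
    then have "1 * f y v $ j < 0" by simp
    from exit_sol[OF cont lip this] obtain T x where sol: "is_solution f (\<lambda>_. v) y T x"
      and ex: "1 * x T $ j < 1 * y $ j" by auto
    have "x T \<in> {xl..xu}" by (rule solbox[OF sol yv(1,3)])
    then have "xl $ j \<le> x T $ j" by (simp add: less_eq_vec_def)
    then show False using ex yv by simp
  qed
  then show "emb_lower Fl xl xu wl wu \<ge> 0" by (simp add: less_eq_vec_def)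
  have "emb_upper Fu xl xu wl wu $ j \<le> 0" for j
  proof (rule ccontr)
    assume "\<not> ?thesis"
    then have pos: "Fu (repl xl j xu) xu wl wu $ j > 0" by (simp add: emb_upper_def)
    define X where "X = {f x w $ j | x w. x \<in> {repl xl j xu..xu} \<and> w \<in> {wl..wu}}"
    have "Fu (repl xl j xu) xu wl wu $ j = Sup X"
      using minf hi_ord[of j] W unfolding minimal_inclusion_function_def X_def by simp
    then have "0 < Sup X" using pos by simp
    moreover have "X \<noteq> {}" unfolding X_def using hi_ord[of j] W by auto
    ultimately obtain el where "el \<in> X" "0 < el" using less_cSupD by blast
    then obtain y v where yv: "y \<in> {xl..xu}" "y $ j = xu $ j" "v \<in> {wl..wu}" "f y v $ j > 0"
      unfolding X_def hi_face by auto
    then have "(-1) * f y v $ j < 0" "\<bar>-1::real\<bar> = 1" by simp_all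
    from exit_sol[OF cont lip this] obtain T x where sol: "is_solution f (\<lambda>_. v) y T x"
      and ex: "(-1) * x T $ j < (-1) * y $ j" by auto
    have "x T \<in> {xl..xu}" by (rule solbox[OF sol yv(1,3)])
    then have "x T $ j \<le> xu $ j" by (simp add: less_eq_vec_def)
    then show False using ex yv by simp
  qed
  then show "emb_upper Fu xl xu wl wu \<le> 0" by (simp add: less_eq_vec_def)
qed

end
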